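(* Let $\varphi:\mathcal K\to[0,\infty)$ be a completely alternating, upper semicontinuous set-function with $\varphi(\emptyset)=0$, and let $\nu_\varphi$ be a locally finite measure on $\mathcal F'$ such that $\nu_\varphi(\mathcal F_K)=\varphi(K)$ for all $K\in\mathcal K$. Then for every $f\in\mathrm{USC}$, $$\int f\,d\varphi=\int_{\mathcal F'} f^\vee\,d\nu_\varphi\qquad\text{and}\qquad \int^e f\,d\varphi=\int^e f^\vee\,d\nu_\varphi ,$$ where on the right the first integral is the Lebesgue integral and the second is $\int^e g\,d\nu_\varphi:=\sup_{t>0} t\,\nu_\varphi(\{F\in\mathcal F':\ g(F)\ge t\})$.
   Context: $E$ is a locally compact Hausdorff second countable space; $\mathcal K$ and $\mathcal F$ denote the families of compact and closed subsets of $E$, $\mathcal F'=\mathcal F\setminus\{\emptyset\}$, and for $K\in\mathcal K$, $\mathcal F_K=\{F\in\mathcal F:\ F\cap K\neq\emptyset\}$; $\mathcal F'$ carries the $\sigma$-algebra generated by the sets $\mathcal F_K$, $K\in\mathcal K$. A measure $\nu$ on $\mathcal F'$ is locally finite if $\nu(\mathcal F_K)<\infty$ for all $K\in\mathcal K$. $\varphi:\mathcal K\to[0,\infty)$ is completely alternating if the recursively defined differences $\Delta_{K_1}\varphi(K)=\varphi(K)-\varphi(K\cup K_1)$, $\Delta_{K_n}\cdots\Delta_{K_1}\varphi(K)=\Delta_{K_{n-1}}\cdots\Delta_{K_1}\varphi(K)-\Delta_{K_{n-1}}\cdots\Delta_{K_1}\varphi(K\cup K_n)$ are $\le 0$ for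 all $n\ge1$ and $K,K_1,\dots,K_n\in\mathcal K$; it is upper semicontinuous if $\varphi(K_n)\downarrow\varphi(K)$ whenever $K_n\downarrow K$ in $\mathcal K$. $\mathrm{USC}$ is the family of bounded non-negative upper semicontinuous functions on $E$ with relatively compact support $\{f\neq0\}$ (so $\{f\ge t\}\in\mathcal K$ for $t>0$). For $f\in\mathrm{USC}$: Choquet integral $\int f\,d\varphi=\int_0^\infty\varphi(\{f\ge t\})\,dt$; extremal integral $\int^e f\,d\varphi=\sup\{\varphi(K)\inf_{x\in K}f(x):\ K\in\mathcal K\}$. For a closed set $F$, $f^\vee(F)=\sup_{x\in F}f(x)$. *)

theory Defs
  imports "HOL-Analysis.Analysis"
begin

text \<open>Iterated differences. The list [K_n, ..., K_1] encodes Delta_{K_n} ... Delta_{K_1} phi(K).\<close>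
fun Delta :: "('a set \<Rightarrow> real) \<Rightarrow> 'a set list \<Rightarrow> 'a set \<Rightarrow> real" where
  "Delta \<phi> [] K = \<phi> K"
| "Delta \<phi> (Kn # Ks) K = Delta \<phi> Ks K - Delta \<phi> Ks (K \<union> Kn)"

definition completely_alternating :: "('a::topological_space set \<Rightarrow> real) \<Rightarrow> bool" where
  "completely_alternating \<phi> \<longleftrightarrow>
     (\<forall>Ks K. Ks \<noteq> [] \<and> compact K \<and> (\<forall>L\<in>set Ks. compact L) \<longrightarrow> Delta \<phi> Ks K \<le> 0)"

definition usc_setfun :: "('a::topological_space set \<Rightarrow> real) \<Rightarrow> bool" where
  "usc_setfun \<phi> \<longleftrightarrow>
     (\<forall>Kn :: nat \<Rightarrow> 'a set. (\<forall>n. compact (Kn n)) \<and> decseq Kn \<longrightarrow>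
        (\<lambda>n. \<phi> (Kn n)) \<longlonglongrightarrow> \<phi> (\<Inter>n. Kn n))"

definition hitting :: "'a::topological_space set \<Rightarrow> 'a set set" where
  "hitting K = {F. closed F \<and> F \<noteq> {} \<and> F \<inter> K \<noteq> {}}"

definition closed_nonempty :: "'a::topological_space set set" where
  "closed_nonempty = {F. closed F \<and> F \<noteq> {}}"

definition USC :: "('a::topological_space \<Rightarrow> real) set" where
  "USC = {f. bounded (range f) \<and> (\<forall>x. f x \<ge> 0) \<and> (\<forall>t. open {x. f x < t})
              \<and> compact (closure {x. f x \<noteq> 0})}"

definition choquet_integral :: "('a \<Rightarrow> real) \<Rightarrow> ('a set \<Rightarrow> real) \<Rightarrow> ennreal" where
  "choquet_integral f \<phi> = (\<integral>\<^sup>+ t. indicator {0<..} t * ennreal (\<phi> {x. f x \<ge> t}) \<partial>lborel)"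

definition extremal_integral :: "('a::topological_space \<Rightarrow> real) \<Rightarrow> ('a set \<Rightarrow> real) \<Rightarrow> ennreal" where
  "extremal_integral f \<phi> = (SUP K\<in>{K. compact K}. ennreal (\<phi> K * Inf (f ` K)))"

definition sup_on :: "('a \<Rightarrow> real) \<Rightarrow> 'a set \<Rightarrow> real" where
  "sup_on f F = Sup (f ` F)"

definition extremal_integral_measure :: "('b \<Rightarrow> real) \<Rightarrow> 'b measure \<Rightarrow> ennreal" where
  "extremal_integral_measure g M = (SUP t\<in>{0<..}. ennreal t * emeasure M {F\<in>space M. g F \<ge> t})"

end

theory Submission imports Defs begin

lemma USC_facts:
  assumes "f \<in> USC"
  shows "bdd_above (range f)" "\<And>x. f x \<ge> 0" "\<And>t. open {x. f x < t}"
    "compact (closure {x. f x \<noteq> 0})"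
  using assms unfolding USC_def by (auto intro: bounded_imp_bdd_above)

lemma USC_level_compact:
  assumes "f \<in> USC" "t > 0"
  shows "compact {x. t \<le> f x}"
proof -
  have cl: "closed {x. t \<le> f x}"
  proof -
    have "{x. t \<le> f x} = - {x. f x < t}" by auto
    thus ?thesis using USC_facts(3)[OF assms(1)] by (simp add: closed_def)
  qed
  have "{x. t \<le> f x} \<subseteq> closure {x. f x \<noteq> 0}"
    using assms(2) closure_subset by fastforce
  hence "{x. t \<le> f x} = {x. t \<le> f x} \<inter> closure {x. f x \<noteq> 0}" by blast
  thus ?thesis using cl USC_facts(4)[OF assms(1)] closed_Int_compact by metis
qed

lemma sup_ge_iff:
  assumes fU: "f \<in> USC" and F: "closed F" "F \<noteq> {}" and t: "t > 0"
  shows "t \<le> sup_on f F \<longleftrightarrow> (\<exists>x\<in>F. t \<le> f x)"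
proof
  assume "\<exists>x\<in>F. t \<le> f x"
  then obtain x where "x \<in> F" "t \<le> f x" by blast
  moreover have "bdd_above (f ` F)" using USC_facts(1)[OF fU]
    by (meson bdd_above_mono image_mono top_greatest)
  ultimately show "t \<le> sup_on f F" unfolding sup_on_def
    by (meson cSup_upper2 imageI)
next
  assume ge: "t \<le> sup_on f F"
  show "\<exists>x\<in>F. t \<le> f x"
  proof (rule ccontr)
    assume "\<not> ?thesis"
    hence lt: "\<And>x. x \<in> F \<Longrightarrow> f x < t" by force
    define C where "C = closure {x. f x \<noteq> 0}"
    have D: "compact (F \<inter> C)" using F(1) USC_facts(4)[OF fU] C_def closed_Int_compact by blast
    have "F \<inter> C \<subseteq> (\<Union>s\<in>{..<t}. {x. f x < s})"
    proof
      fix x assume "x \<in> F \<inter> C"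
      hence "f x < t" using lt by blast
      hence "(f x + t)/2 \<in> {..<t}" "f x < (f x + t)/2" by auto
      thus "x \<in> (\<Union>s\<in>{..<t}. {x. f x < s})" by blast
    qed
    then obtain S where S: "S \<subseteq> {..<t}" "finite S" "F \<inter> C \<subseteq> (\<Union>s\<in>S. {x. f x < s})"
      using compactE_image[OF D, of "{..<t}" "\<lambda>s. {x. f x < s}"] USC_facts(3)[OF fU] by metis
    define s0 where "s0 = (if S = {} then 0 else max 0 (Max S))"
    have s0t: "s0 < t" using S t unfolding s0_def by auto
    have "\<And>x. x \<in> F \<Longrightarrow> f x \<le> s0"
    proof -
      fix x assume xF: "x \<in> F"
      show "f x \<le> s0"
      proof (cases "x \<in> C")
        case True
        then obtain s where s: "s \<in> S" "f x < s" using S(3) xF by blast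
        have m: "s \<le> Max S" using S(2) s(1) by simp
        have "S \<noteq> {}" using s(1) by blast
        hence "Max S \<le> s0" unfolding s0_def by simp
        thus ?thesis using m s(2) by linarith
      next
        case False
        have "{x. f x \<noteq> 0} \<subseteq> C" unfolding C_def by (rule closure_subset)
        hence "f x = 0" using False by blast
        thus ?thesis unfolding s0_def by auto
      qed
    qed
    hence "sup_on f F \<le> s0" unfolding sup_on_def using F(2) by (intro cSup_least) auto
    thus False using ge s0t by linarith
  qed
qed


lemma mono_phi:
  assumes ca: "completely_alternating \<phi>" and K: "compact K" "compact L" "K \<subseteq> L"
  shows "\<phi> K \<le> \<phi> L"
proof -
  have "Delta \<phi> [L] K \<le> 0" using ca unfolding completely_alternating_def
    apply (erule_tac x="[L]" in allE, erule_tac x=K in allE) using K by simp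
  hence "\<phi> K \<le> \<phi> (K \<union> L)" by simp
  thus ?thesis using K(3) by (simp add: sup_absorb2)
qed

theorem mainTheorem1:
  fixes \<phi> :: "'a::{t2_space, second_countable_topology} set \<Rightarrow> real"
    and \<nu> :: "'a set measure"
    and f :: "'a \<Rightarrow> real"
  assumes lc: "locally_compact_space (euclidean :: 'a topology)"
    and nonneg: "\<And>K. compact K \<Longrightarrow> \<phi> K \<ge> 0"
    and ca: "completely_alternating \<phi>"
    and usc: "usc_setfun \<phi>"
    and empty: "\<phi> {} = 0"
    and space_nu: "space \<nu> = closed_nonempty"
    and sets_nu: "sets \<nu> = sigma_sets closed_nonempty {hitting K | K. compact K}"
    and loc_fin: "\<And>K. compact K \<Longrightarrow> emeasure \<nu> (hitting K) < \<infinity>"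
    and capacity: "\<And>K. compact K \<Longrightarrow> emeasure \<nu> (hitting K) = ennreal (\<phi> K)"
    and f_usc: "f \<in> USC"
  shows "choquet_integral f \<phi> = (\<integral>\<^sup>+ F. ennreal (sup_on f F) \<partial>\<nu>)
     \<and> extremal_integral f \<phi> = extremal_integral_measure (sup_on f) \<nu>"
proof -
  define g where "g = sup_on f"
  define C where "C = closure {x. f x \<noteq> 0}"
  define H where "H = hitting C"
  have Cc: "compact C" using USC_facts(4)[OF f_usc] C_def by simp
  have hit_sets: "\<And>K. compact K \<Longrightarrow> hitting K \<in> sets \<nu>"
    using sets_nu by (auto intro: sigma_sets.Basic)
  have hit_space: "\<And>K. hitting K \<subseteq> space \<nu>"
    unfolding space_nu hitting_def closed_nonempty_def by auto
  have g_nn: "\<And>F. F \<in> space \<nu> \<Longrightarrow> g F \<ge> 0"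
  proof -
    fix F assume "F \<in> space \<nu>"
    hence F: "closed F" "F \<noteq> {}" using space_nu closed_nonempty_def by auto
    then obtain x where x: "x \<in> F" by blast
    have "bdd_above (f ` F)" using USC_facts(1)[OF f_usc]
      by (meson bdd_above_mono image_mono top_greatest)
    hence "f x \<le> g F" unfolding g_def sup_on_def using x by (meson cSup_upper imageI)
    thus "g F \<ge> 0" using USC_facts(2)[OF f_usc, of x] by linarith
  qed
  have level: "\<And>t. t > 0 \<Longrightarrow> {F\<in>space \<nu>. t \<le> g F} = hitting {x. t \<le> f x}"
  proof -
    fix t :: real assume t: "t > 0"
    show "{F\<in>space \<nu>. t \<le> g F} = hitting {x. t \<le> f x}"
    proof (rule set_eqI)
      fix F
      have e1: "F \<in> space \<nu> \<longleftrightarrow> closed F \<and> F \<noteq> {}" using space_nu by (simp add: closed_nonempty_def)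
      have e2: "F \<in> hitting {x. t \<le> f x} \<longleftrightarrow> closed F \<and> F \<noteq> {} \<and> (\<exists>x\<in>F. t \<le> f x)"
        unfolding hitting_def by blast
      show "F \<in> {F\<in>space \<nu>. t \<le> g F} \<longleftrightarrow> F \<in> hitting {x. t \<le> f x}"
      proof (cases "closed F \<and> F \<noteq> {}")
        case True
        thus ?thesis using e1 e2 sup_ge_iff[OF f_usc _ _ t, of F] unfolding g_def by blast
      next
        case False
        thus ?thesis using e1 e2 by blast
      qed
    qed
  qed
  have lev_cpt: "\<And>t. t > 0 \<Longrightarrow> compact {x. t \<le> f x}" using USC_level_compact[OF f_usc] by blast
  have g_meas[measurable]: "g \<in> borel_measurable \<nu>"
    unfolding borel_measurable_iff_ge
  proof
    fix a :: real
    show "{w \<in> space \<nu>. a \<le> g w} \<in> sets \<nu>"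
    proof (cases "a > 0")
      case True thus ?thesis using level lev_cpt hit_sets by simp
    next
      case False
      hence "{w \<in> space \<nu>. a \<le> g w} = space \<nu>" using g_nn by force
      thus ?thesis by simp
    qed
  qed
  have lev_H: "\<And>t. t > 0 \<Longrightarrow> hitting {x. t \<le> f x} \<subseteq> H"
  proof -
    fix t :: real assume t: "t > 0"
    have "{x. t \<le> f x} \<subseteq> {x. f x \<noteq> 0}" using t by auto
    also have "\<dots> \<subseteq> C" unfolding C_def by (rule closure_subset)
    finally have sub: "{x. t \<le> f x} \<subseteq> C" .
    show "hitting {x. t \<le> f x} \<subseteq> H" unfolding H_def hitting_def using sub by blast
  qed
  have g_zero: "\<And>F. F \<in> space \<nu> \<Longrightarrow> F \<notin> H \<Longrightarrow> g F = 0"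
  proof -
    fix F assume F: "F \<in> space \<nu>" "F \<notin> H"
    show "g F = 0"
    proof (rule ccontr)
      assume "g F \<noteq> 0"
      hence gp: "g F > 0" using g_nn[OF F(1)] by linarith
      hence "F \<in> {F\<in>space \<nu>. g F \<le> g F}" using F by simp
      hence "F \<in> hitting {x. g F \<le> f x}" using level[OF gp] by blast
      thus False using lev_H[OF gp] F(2) by blast
    qed
  qed
  have Hsets: "H \<inter> space \<nu> \<in> sets \<nu>"
    using hit_sets[OF Cc] hit_space unfolding H_def by (simp add: Int_absorb2)
  define M' where "M' = restrict_space \<nu> H"
  have spM': "space M' = H"
    unfolding M'_def using hit_space H_def by (simp add: space_restrict_space Int_absorb2)
  have emM': "\<And>A. A \<subseteq> H \<Longrightarrow> emeasure M' A = emeasure \<nu> A"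
    unfolding M'_def using Hsets by (simp add: emeasure_restrict_space)
  interpret M': finite_measure M'
    using loc_fin[OF Cc] by (intro finite_measureI) (simp add: spM' emM' H_def)
  interpret P: pair_sigma_finite M' lborel
    by (simp add: pair_sigma_finite_def M'.sigma_finite_measure_axioms sigma_finite_lborel)
  have gM'[measurable]: "g \<in> borel_measurable M'"
    unfolding M'_def by (rule measurable_restrict_space1) simp
  have part1: "choquet_integral f \<phi> = (\<integral>\<^sup>+ F. ennreal (g F) \<partial>\<nu>)"
  proof -
    have "(\<integral>\<^sup>+ F. ennreal (g F) \<partial>\<nu>) = (\<integral>\<^sup>+ F. ennreal (g F) * indicator H F \<partial>\<nu>)"
      by (rule nn_integral_cong) (auto simp: g_zero split: split_indicator)
    also have "\<dots> = (\<integral>\<^sup>+ F. ennreal (g F) \<partial>M')"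
      unfolding M'_def using Hsets by (simp add: nn_integral_restrict_space)
    also have "\<dots> = (\<integral>\<^sup>+ F. (\<integral>\<^sup>+ t. (if 0 < t \<and> t \<le> g F then 1 else 0) \<partial>lborel) \<partial>M')"
    proof (rule nn_integral_cong)
      fix F assume "F \<in> space M'"
      hence gF: "g F \<ge> 0" using g_nn spM' hit_space H_def by blast
      have "(\<integral>\<^sup>+ t. (if 0 < t \<and> t \<le> g F then 1 else 0) \<partial>lborel) =
            (\<integral>\<^sup>+ t. indicator {0<..g F} t \<partial>lborel)"
        by (rule nn_integral_cong) (auto split: split_indicator)
      also have "\<dots> = ennreal (g F)" using gF by simp
      finally show "ennreal (g F) = (\<integral>\<^sup>+ t. (if 0 < t \<and> t \<le> g F then 1 else 0) \<partial>lborel)" by simp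
    qed
    also have "\<dots> = (\<integral>\<^sup>+ t. (\<integral>\<^sup>+ F. (if 0 < t \<and> t \<le> g F then 1 else 0) \<partial>M') \<partial>lborel)"
      by (rule P.Fubini'[symmetric]) measurable
    also have "\<dots> = (\<integral>\<^sup>+ t. indicator {0<..} t * ennreal (\<phi> {x. f x \<ge> t}) \<partial>lborel)"
    proof (rule nn_integral_cong)
      fix t :: real
      show "(\<integral>\<^sup>+ F. (if 0 < t \<and> t \<le> g F then 1 else 0) \<partial>M') = indicator {0<..} t * ennreal (\<phi> {x. f x \<ge> t})"
      proof (cases "t > 0")
        case True
        have "(\<integral>\<^sup>+ F. (if 0 < t \<and> t \<le> g F then 1 else 0) \<partial>M') =
              (\<integral>\<^sup>+ F. indicator {F\<in>space M'. t \<le> g F} F \<partial>M')"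
          by (rule nn_integral_cong) (use True in \<open>auto split: split_indicator\<close>)
        also have "\<dots> = emeasure M' {F\<in>space M'. t \<le> g F}" by simp
        also have "{F\<in>space M'. t \<le> g F} = hitting {x. t \<le> f x}"
          using level[OF True] lev_H[OF True] spM' hit_space H_def by blast
        also have "emeasure M' (hitting {x. t \<le> f x}) = ennreal (\<phi> {x. f x \<ge> t})"
          using emM'[OF lev_H[OF True]] capacity[OF lev_cpt[OF True]] by simp
        finally show ?thesis using True by simp
      next
        case False
        thus ?thesis by simp
      qed
    qed
    finally show ?thesis unfolding choquet_integral_def by simp
  qed
  have part2: "extremal_integral f \<phi> = extremal_integral_measure g \<nu>"
  proof -
    have eq: "extremal_integral_measure g \<nu> = (SUP t\<in>{0<..}. ennreal (t * \<phi> {x. t \<le> f x}))"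
      unfolding extremal_integral_measure_def
    proof (rule SUP_cong)
      fix t :: real assume "t \<in> {0<..}"
      hence t: "t > 0" by simp
      show "ennreal t * emeasure \<nu> {F\<in>space \<nu>. t \<le> g F} = ennreal (t * \<phi> {x. t \<le> f x})"
        using level[OF t] capacity[OF lev_cpt[OF t]] t nonneg[OF lev_cpt[OF t]]
        by (simp add: ennreal_mult)
    qed simp
    show ?thesis unfolding eq extremal_integral_def
    proof (rule antisym)
      show "(SUP K\<in>{K. compact K}. ennreal (\<phi> K * Inf (f ` K))) \<le> (SUP t\<in>{0<..}. ennreal (t * \<phi> {x. t \<le> f x}))"
      proof (rule SUP_least)
        fix K :: "'a set" assume "K \<in> {K. compact K}"
        hence K: "compact K" by simp
        show "ennreal (\<phi> K * Inf (f ` K)) \<le> (SUP t\<in>{0<..}. ennreal (t * \<phi> {x. t \<le> f x}))"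
        proof (cases "K = {}")
          case True thus ?thesis using empty by simp
        next
          case False
          define m where "m = Inf (f ` K)"
          have m0: "m \<ge> 0" unfolding m_def using False USC_facts(2)[OF f_usc]
            by (intro cInf_greatest) auto
          show ?thesis
          proof (cases "m = 0")
            case True thus ?thesis unfolding m_def by simp
          next
            case False
            hence mp: "m > 0" using m0 by simp
            have bb: "bdd_below (f ` K)" using USC_facts(2)[OF f_usc]
              by (meson bdd_belowI2)
            have sub: "K \<subseteq> {x. m \<le> f x}" unfolding m_def using bb by (auto intro: cInf_lower)
            have "\<phi> K \<le> \<phi> {x. m \<le> f x}" by (rule mono_phi[OF ca K lev_cpt[OF mp] sub])
            hence "\<phi> K * m \<le> m * \<phi> {x. m \<le> f x}" using mp by (simp add: mult.commute)
            hence "ennreal (\<phi> K * m) \<le> ennreal (m * \<phi> {x. m \<le> f x})" by (rule ennreal_leI)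
            also have "\<dots> \<le> (SUP t\<in>{0<..}. ennreal (t * \<phi> {x. t \<le> f x}))"
              using mp by (intro SUP_upper) simp
            finally show ?thesis unfolding m_def .
          qed
        qed
      qed
    next
      show "(SUP t\<in>{0<..}. ennreal (t * \<phi> {x. t \<le> f x})) \<le> (SUP K\<in>{K. compact K}. ennreal (\<phi> K * Inf (f ` K)))"
      proof (rule SUP_least)
        fix t :: real assume "t \<in> {0<..}"
        hence t: "t > 0" by simp
        define K where "K = {x. t \<le> f x}"
        have K: "compact K" unfolding K_def using lev_cpt[OF t] .
        have "ennreal (t * \<phi> K) \<le> ennreal (\<phi> K * Inf (f ` K))"
        proof (cases "K = {}")
          case True thus ?thesis using empty by simp
        next
          case False
          have "t \<le> Inf (f ` K)" using False unfolding K_def by (intro cInf_greatest) auto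
          hence "t * \<phi> K \<le> \<phi> K * Inf (f ` K)" using nonneg[OF K]
            by (metis mult.commute mult_left_mono)
          thus ?thesis by (rule ennreal_leI)
        qed
        also have "\<dots> \<le> (SUP K\<in>{K. compact K}. ennreal (\<phi> K * Inf (f ` K)))"
          using K by (intro SUP_upper) simp
        finally show "ennreal (t * \<phi> {x. t \<le> f x}) \<le> (SUP K\<in>{K. compact K}. ennreal (\<phi> K * Inf (f ` K)))"
          unfolding K_def .
      qed
    qed
  qed
  show ?thesis using part1 part2 unfolding g_def by simp
qed

end
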